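(* A strong erasing word for $(G,\phi)$ exists in each of the following cases: (i) $G$ is a non-bipartite separable graph and $\phi$ is any admissible matching policy; (ii) $G$ is connected and non-bipartite and $\phi=\textsc{lcfm}$.
   Context: $G=(\mathcal V,\mathcal E)$ is a finite connected simple graph, $i - j$ denotes adjacency. $G$ is separable of order $p\ge2$ if $\mathcal V$ is partitioned into maximal independent sets $\mathcal I_1,\dots,\mathcal I_p$ such that any two nodes in different parts are adjacent; a separable graph is non-bipartite iff $p\ge3$. A list of preferences $\sigma\in\mathcal S$ gives for each class a linear ordering of its neighbours; $\phi$ comes with a probability $\nu_\phi$ on $\mathcal S$. $\mathbb W=\{w\in\mathcal V^*:|w|_i|w|_j=0 \text{ whenever } i - j\}$. Admissible $\phi$: a map $\odot_\phi:\mathbb W\times(\mathcal V\times\mathcal S)\to\mathbb W$ with $w\odot_\phi(v,\sigma)=wv$ if no letter of $w$ is adjacent to $v$, otherwise $w$ with one letter adjacent to $v$ (chosen by $\phi$) deleted; LCFM deletes the rightmost letter of $w$ adjacent to $v$. $Q_\phi(z_1\cdots z_k,\varsigma_1\cdots\varsigma_k)=(\cdots(\emptyset\odot_\phi(z_1,\varsigma_1))\cdots)\odot_\phi(z_k,\varsigma_k)$. A word $z\in\mathcal V^*$ of even length $2p$ is a strong erasing word for $(G,\phi)$ if (1) for all non-adjacent $i,j\in\mathcal V$ (possibly $i=j$) and all preference words $\varsigma,\varsigma'$ of lengths $2$ and $2p$ with letters in the support of $\nu_\phi$, $Q_\phi(ijz,\varsigma\varsigma')=\emptyset$; and (2) for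 every $\ell\in\{0,\dots,p-1\}$ and all such $\varsigma'$, $Q_\phi(z_{2\ell+1}\cdots z_{2p},\varsigma'_{2\ell+1}\cdots\varsigma'_{2p})=\emptyset$. *)

theory Defs
  imports "HOL-Probability.Probability_Mass_Function"
begin

definition simple_graph :: "'v set \<Rightarrow> ('v \<Rightarrow> 'v \<Rightarrow> bool) \<Rightarrow> bool" where
  "simple_graph V adj \<longleftrightarrow> finite V \<and> V \<noteq> {} \<and>
     (\<forall>u v. adj u v \<longrightarrow> u \<in> V \<and> v \<in> V) \<and>
     (\<forall>u v. adj u v \<longrightarrow> adj v u) \<and> (\<forall>u. \<not> adj u u)"

definition connected_graph :: "'v set \<Rightarrow> ('v \<Rightarrow> 'v \<Rightarrow> bool) \<Rightarrow> bool" where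
  "connected_graph V adj \<longleftrightarrow> (\<forall>u\<in>V. \<forall>v\<in>V. adj\<^sup>*\<^sup>* u v)"

definition bipartite :: "'v set \<Rightarrow> ('v \<Rightarrow> 'v \<Rightarrow> bool) \<Rightarrow> bool" where
  "bipartite V adj \<longleftrightarrow> (\<exists>f :: 'v \<Rightarrow> bool. \<forall>u\<in>V. \<forall>v\<in>V. adj u v \<longrightarrow> f u \<noteq> f v)"

definition independent_set :: "('v \<Rightarrow> 'v \<Rightarrow> bool) \<Rightarrow> 'v set \<Rightarrow> bool" where
  "independent_set adj I \<longleftrightarrow> (\<forall>u\<in>I. \<forall>v\<in>I. \<not> adj u v)"

definition maximal_independent_set :: "'v set \<Rightarrow> ('v \<Rightarrow> 'v \<Rightarrow> bool) \<Rightarrow> 'v set \<Rightarrow> bool" where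
  "maximal_independent_set V adj I \<longleftrightarrow> I \<subseteq> V \<and> independent_set adj I \<and>
     (\<forall>J. I \<subset> J \<and> J \<subseteq> V \<longrightarrow> \<not> independent_set adj J)"

definition separable_of_order :: "'v set \<Rightarrow> ('v \<Rightarrow> 'v \<Rightarrow> bool) \<Rightarrow> nat \<Rightarrow> bool" where
  "separable_of_order V adj p \<longleftrightarrow> p \<ge> 2 \<and>
     (\<exists>P. card P = p \<and> \<Union>P = V \<and> (\<forall>I\<in>P. I \<noteq> {}) \<and>
          (\<forall>I\<in>P. \<forall>J\<in>P. I \<noteq> J \<longrightarrow> I \<inter> J = {}) \<and>
          (\<forall>I\<in>P. maximal_independent_set V adj I) \<and>
          (\<forall>I\<in>P. \<forall>J\<in>P. I \<noteq> J \<longrightarrow> (\<forall>u\<in>I. \<forall>v\<in>J. adj u v)))"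

definition prefs :: "'v set \<Rightarrow> ('v \<Rightarrow> 'v \<Rightarrow> bool) \<Rightarrow> ('v \<Rightarrow> 'v list) set" where
  "prefs V adj = {\<sigma>. (\<forall>v\<in>V. distinct (\<sigma> v) \<and> set (\<sigma> v) = {u. adj v u}) \<and>
                      (\<forall>v. v \<notin> V \<longrightarrow> \<sigma> v = [])}"

definition in_W :: "('v \<Rightarrow> 'v \<Rightarrow> bool) \<Rightarrow> 'v list \<Rightarrow> bool" where
  "in_W adj w \<longleftrightarrow> (\<forall>i\<in>set w. \<forall>j\<in>set w. \<not> adj i j)"

definition admissible ::
  "'v set \<Rightarrow> ('v \<Rightarrow> 'v \<Rightarrow> bool) \<Rightarrow> ('v \<Rightarrow> 'v list) pmf \<Rightarrow>
   ('v list \<Rightarrow> 'v \<Rightarrow> ('v \<Rightarrow> 'v list) \<Rightarrow> 'v list) \<Rightarrow> bool" where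
  "admissible V adj \<nu> step \<longleftrightarrow> set_pmf \<nu> \<subseteq> prefs V adj \<and>
     (\<forall>w v \<sigma>. set w \<subseteq> V \<and> in_W adj w \<and> v \<in> V \<and> \<sigma> \<in> prefs V adj \<longrightarrow>
        (if (\<forall>u\<in>set w. \<not> adj u v) then step w v \<sigma> = w @ [v]
         else (\<exists>k<length w. adj (w ! k) v \<and> step w v \<sigma> = take k w @ drop (Suc k) w)))"

definition lcfm :: "('v \<Rightarrow> 'v \<Rightarrow> bool) \<Rightarrow> 'v list \<Rightarrow> 'v \<Rightarrow> ('v \<Rightarrow> 'v list) \<Rightarrow> 'v list" where
  "lcfm adj w v \<sigma> =
     (if (\<exists>k<length w. adj (w ! k) v)
      then (let k = (GREATEST k. k < length w \<and> adj (w ! k) v) in take k w @ drop (Suc k) w)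
      else w @ [v])"

definition Q :: "('v list \<Rightarrow> 'v \<Rightarrow> 's \<Rightarrow> 'v list) \<Rightarrow> 'v list \<Rightarrow> 's list \<Rightarrow> 'v list" where
  "Q step zs ss = foldl (\<lambda>w (x, s). step w x s) [] (zip zs ss)"

definition strong_erasing_word ::
  "'v set \<Rightarrow> ('v \<Rightarrow> 'v \<Rightarrow> bool) \<Rightarrow> ('v \<Rightarrow> 'v list) pmf \<Rightarrow>
   ('v list \<Rightarrow> 'v \<Rightarrow> ('v \<Rightarrow> 'v list) \<Rightarrow> 'v list) \<Rightarrow> 'v list \<Rightarrow> bool" where
  "strong_erasing_word V adj \<nu> step z \<longleftrightarrow> set z \<subseteq> V \<and> even (length z) \<and>
     (\<forall>i\<in>V. \<forall>j\<in>V. \<not> adj i j \<longrightarrow>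
        (\<forall>s s'. length s = 2 \<and> length s' = length z \<and> set s \<subseteq> set_pmf \<nu> \<and> set s' \<subseteq> set_pmf \<nu> \<longrightarrow>
           Q step ([i, j] @ z) (s @ s') = [])) \<and>
     (\<forall>l < length z div 2. \<forall>s'. length s' = length z \<and> set s' \<subseteq> set_pmf \<nu> \<longrightarrow>
        Q step (drop (2 * l) z) (drop (2 * l) s') = [])"

end

theory Submission
  imports Defs
begin


lemma L_app: "adj u v \<Longrightarrow> lcfm adj (w@[u]) v \<sigma> = w"
proof -
  assume a: "adj u v"
  have g: "(GREATEST k. k < length (w@[u]) \<and> adj ((w@[u]) ! k) v) = length w"
    by (rule Greatest_equality) (auto simp: a)
  have "\<exists>k<length (w@[u]). adj ((w@[u]) ! k) v" using a by (intro exI[of _ "length w"]) auto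
  then show ?thesis unfolding lcfm_def Let_def g by simp
qed

lemma L_nil: "lcfm adj [] v \<sigma> = [v]" by (simp add: lcfm_def)
lemma L_one_no: "\<not> adj x v \<Longrightarrow> lcfm adj [x] v \<sigma> = [x,v]" by (simp add: lcfm_def)
lemma L_one_yes: "adj x v \<Longrightarrow> lcfm adj [x] v \<sigma> = []" using L_app[of adj x v "[]"] by simp
lemma L_two_first: "\<not> adj y u \<Longrightarrow> adj x u \<Longrightarrow> lcfm adj [x,y] u \<sigma> = [y]"
proof -
  assume a: "\<not> adj y u" "adj x u"
  have g: "(GREATEST k. k < length [x,y] \<and> adj ([x,y] ! k) u) = 0"
    by (rule Greatest_equality) (auto simp: a less_Suc_eq nth_Cons split: nat.splits)
  have "\<exists>k<length [x,y]. adj ([x,y] ! k) u" using a by (intro exI[of _ 0]) auto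
  then show ?thesis unfolding lcfm_def Let_def g by simp
qed
lemma L_two_second: "adj y u \<Longrightarrow> lcfm adj [x,y] u \<sigma> = [x]" using L_app[of adj y u "[x]"] by simp
lemma L_two_none: "\<not> adj x u \<Longrightarrow> \<not> adj y u \<Longrightarrow> lcfm adj [x,y] u \<sigma> = [x,y,u]"
proof -
  assume a: "\<not> adj x u" "\<not> adj y u"
  have "\<not>(\<exists>k<length [x,y]. adj ([x,y] ! k) u)" using a by (auto simp: less_Suc_eq nth_Cons split: nat.splits)
  then show ?thesis by (simp only: lcfm_def if_not_P) simp
qed

definition lrun :: "('v \<Rightarrow> 'v \<Rightarrow> bool) \<Rightarrow> 'v list \<Rightarrow> 'v list \<Rightarrow> 'v list" where
  "lrun adj w xs = foldl (\<lambda>w x. lcfm adj w x (\<lambda>_. [])) w xs"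

lemma lcfm_indep: "lcfm adj w x s = lcfm adj w x (\<lambda>_. [])" by (simp add: lcfm_def)

lemma fold_lrun: "length ss = length xs \<Longrightarrow> foldl (\<lambda>w (x, s). lcfm adj w x s) w (zip xs ss) = lrun adj w xs"
proof (induction xs arbitrary: w ss)
  case Nil then show ?case by (simp add: lrun_def)
next
  case (Cons a xs)
  then obtain s ss' where "ss = s # ss'" by (cases ss) auto
  with Cons show ?case by (simp add: lrun_def lcfm_indep[of adj w a s])
qed

lemma lrun_append: "lrun adj w (xs @ ys) = lrun adj (lrun adj w xs) ys" by (simp add: lrun_def)
lemma lrun_Nil[simp]: "lrun adj w [] = w" by (simp add: lrun_def)
lemma lrun_Cons: "lrun adj w (x#xs) = lrun adj (lcfm adj w x (\<lambda>_. [])) xs" by (simp add: lrun_def)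

definition flat :: "('v \<times> 'v) list \<Rightarrow> 'v list" where
  "flat ps = concat (map (\<lambda>(a,b). [a,b]) ps)"

lemma flat_Nil[simp]: "flat [] = []" by (simp add: flat_def)
lemma flat_Cons[simp]: "flat ((a,b)#ps) = a # b # flat ps" by (simp add: flat_def)
lemma flat_append: "flat (ps @ qs) = flat ps @ flat qs" by (simp add: flat_def)
lemma length_flat: "length (flat ps) = 2 * length ps" by (induction ps) auto
lemma drop_flat: "drop (2*l) (flat ps) = flat (drop l ps)"
proof (induction l arbitrary: ps)
  case 0 then show ?case by simp
next
  case (Suc l) then show ?case by (cases ps) auto
qed
lemma set_flat: "set (flat ps) = fst ` set ps \<union> snd ` set ps"
  by (induction ps) force+

lemma lrun_nil_pairs: "\<forall>(a,b)\<in>set ps. adj a b \<Longrightarrow> lrun adj [] (flat ps) = []"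
  by (induction ps) (auto simp: lrun_Cons L_nil L_one_yes)

definition gs :: "'v set \<Rightarrow> ('v \<Rightarrow> 'v \<Rightarrow> bool) \<Rightarrow> 'v list \<Rightarrow> bool" where
  "gs V adj w \<longleftrightarrow> w = [] \<or> (\<exists>x y. w = [x,y] \<and> x \<in> V \<and> y \<in> V \<and> \<not> adj x y)"

lemma sg_sym: "simple_graph V adj \<Longrightarrow> adj u v \<Longrightarrow> adj v u" by (simp add: simple_graph_def)
lemma sg_V: "simple_graph V adj \<Longrightarrow> adj u v \<Longrightarrow> u \<in> V \<and> v \<in> V" by (simp add: simple_graph_def)

lemma pair_gs:
  assumes sg: "simple_graph V adj" and g: "gs V adj w" and e: "adj u v"
  shows "gs V adj (lrun adj w [u,v])"
proof (cases "w = []")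
  case True then show ?thesis using e by (simp add: lrun_Cons L_nil L_one_yes gs_def)
next
  case False
  then obtain x y where w: "w = [x,y]" "x \<in> V" "y \<in> V" "\<not> adj x y" using g by (auto simp: gs_def)
  have vV: "v \<in> V" using sg_V[OF sg e] by simp
  have syx: "\<not> adj y x" using w sg_sym[OF sg] by blast
  show ?thesis
  proof (cases "adj y u")
    case True
    then show ?thesis using w vV
      by (cases "adj x v") (auto simp: lrun_Cons L_two_second L_one_yes L_one_no gs_def)
  next
    case nyu: False
    show ?thesis
    proof (cases "adj x u")
      case True
      then show ?thesis using w vV nyu syx
        by (cases "adj y v") (auto simp: lrun_Cons L_two_first L_one_yes L_one_no gs_def)
    next
      case False
      then show ?thesis using w nyu e L_app[of adj u v "[x,y]"]
        by (auto simp: lrun_Cons L_two_none gs_def)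
    qed
  qed
qed

lemma pairs_gs:
  assumes sg: "simple_graph V adj"
  shows "gs V adj w \<Longrightarrow> \<forall>(a,b)\<in>set ps. adj a b \<Longrightarrow> gs V adj (lrun adj w (flat ps))"
proof (induction ps arbitrary: w)
  case Nil then show ?case by simp
next
  case (Cons p ps)
  obtain a b where p: "p = (a,b)" by (cases p)
  have "gs V adj (lrun adj w [a,b])" using pair_gs[OF sg Cons.prems(1)] Cons.prems(2) p by auto
  then have "gs V adj (lrun adj (lrun adj w [a,b]) (flat ps))" using Cons by auto
  then show ?case using p lrun_append[of adj w "[a,b]" "flat ps"] by simp
qed

lemma kill:
  assumes sg: "simple_graph V adj"
  shows "\<forall>y. (adj ^^ (2*m+1)) x y \<longrightarrow> x \<in> V \<longrightarrow> \<not> adj x y \<longrightarrow>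
     (\<exists>ps. (\<forall>(a,b)\<in>set ps. adj a b) \<and> lrun adj [x,y] (flat ps) = [])"
proof (induction m)
  case 0 then show ?case by auto
next
  case (Suc m)
  show ?case
  proof (intro allI impI)
    fix y assume h: "(adj ^^ (2*Suc m+1)) x y" and xV: "x \<in> V" and nxy: "\<not> adj x y"
    have "(adj ^^ Suc (Suc (2*m+1))) x y" using h by simp
    then obtain b where h1: "(adj ^^ Suc (2*m+1)) x b" and bY: "adj b y" by (auto elim: relpowp_Suc_E)
    then obtain c where h2: "(adj ^^ (2*m+1)) x c" and cb: "adj c b" by (auto elim: relpowp_Suc_E)
    have yb: "adj y b" using sg_sym[OF sg bY] .
    have bc: "adj b c" using sg_sym[OF sg cb] .
    have s1: "lrun adj [x,y] [b,c] = lcfm adj [x] c (\<lambda>_. [])"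
      by (simp add: lrun_Cons L_two_second[of adj y b x, OF yb])
    show "\<exists>ps. (\<forall>(a,b)\<in>set ps. adj a b) \<and> lrun adj [x,y] (flat ps) = []"
    proof (cases "adj x c")
      case True
      then show ?thesis using s1 bc by (intro exI[of _ "[(b,c)]"]) (simp add: L_one_yes)
    next
      case False
      then obtain ps where ps: "\<forall>(a,b)\<in>set ps. adj a b" "lrun adj [x,c] (flat ps) = []"
        using Suc.IH h2 xV by blast
      have "lrun adj [x,y] (flat ((b,c)#ps)) = []"
        using s1 False ps(2) lrun_append[of adj "[x,y]" "[b,c]" "flat ps"] by (simp add: L_one_no)
      then show ?thesis using ps(1) bc by (intro exI[of _ "(b,c)#ps"]) simp
    qed
  qed
qed

lemma relpowp_sym: "simple_graph V adj \<Longrightarrow> (adj ^^ n) x y \<Longrightarrow> (adj ^^ n) y x"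
proof (induction n arbitrary: y)
  case 0 then show ?case by simp
next
  case (Suc n)
  then obtain z where "(adj ^^ n) x z" "adj z y" by (auto elim: relpowp_Suc_E)
  then show ?case using Suc sg_sym[of V adj z y] by (metis relpowp_Suc_I2)
qed

lemma odd_walk:
  assumes sg: "simple_graph V adj" and cn: "connected_graph V adj" and nb: "\<not> bipartite V adj"
    and xV: "x \<in> V" and yV: "y \<in> V"
  shows "\<exists>m. (adj ^^ (2*m+1)) x y"
proof -
  define f where "f u = (\<exists>n. even n \<and> (adj ^^ n) x u)" for u
  obtain u v where uv: "u \<in> V" "v \<in> V" "adj u v" "f u = f v"
    using nb unfolding bipartite_def by blast
  have walk: "\<exists>n. (adj ^^ n) a b" if "a \<in> V" "b \<in> V" for a b
    using cn that unfolding connected_graph_def by (blast intro: rtranclp_imp_relpowp)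
  obtain c where c: "odd c" "(adj ^^ c) x x"
  proof (cases "f u")
    case True
    then obtain n1 n2 where n: "even n1" "(adj ^^ n1) x u" "even n2" "(adj ^^ n2) x v"
      using uv(4) unfolding f_def by auto
    have "(adj ^^ Suc n1) x v" using n(2) uv(3) by (rule relpowp_Suc_I)
    moreover have "(adj ^^ n2) v x" using relpowp_sym[OF sg n(4)] .
    ultimately have cw: "(adj ^^ (Suc n1 + n2)) x x" by (rule relpowp_trans)
    show ?thesis using that[of "Suc n1 + n2", OF _ cw] n by simp
  next
    case False
    obtain n1 where n1: "(adj ^^ n1) x u" using walk xV uv(1) by blast
    have "odd n1" using False n1 unfolding f_def by auto
    have "(adj ^^ Suc n1) x v" using n1 uv(3) by (rule relpowp_Suc_I)
    then have "f v" using \<open>odd n1\<close> unfolding f_def by (intro exI[of _ "Suc n1"]) auto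
    then show ?thesis using False uv(4) by simp
  qed
  obtain n where n: "(adj ^^ n) x y" using walk xV yV by blast
  show ?thesis
  proof (cases "odd n")
    case True
    then obtain m where "n = 2*m+1" by (metis oddE)
    then show ?thesis using n by blast
  next
    case False
    have "(adj ^^ (c + n)) x y" using c(2) n by (rule relpowp_trans)
    moreover have "odd (c+n)" using c(1) False by simp
    ultimately show ?thesis by (metis oddE)
  qed
qed

lemma sync:
  assumes sg: "simple_graph V adj" and cn: "connected_graph V adj" and nb: "\<not> bipartite V adj"
  shows "finite S \<Longrightarrow> S \<subseteq> {w. gs V adj w} \<Longrightarrow>
    \<exists>ps. (\<forall>(a,b)\<in>set ps. adj a b) \<and> (\<forall>s\<in>S. lrun adj s (flat ps) = [])"
proof (induction S rule: finite_induct)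
  case empty then show ?case by (intro exI[of _ "[]"]) simp
next
  case (insert s S)
  then obtain ps where ps: "\<forall>(a,b)\<in>set ps. adj a b" "\<forall>s\<in>S. lrun adj s (flat ps) = []" by auto
  define t where "t = lrun adj s (flat ps)"
  have "gs V adj t" using pairs_gs[OF sg _ ps(1)] insert.prems t_def by auto
  then obtain qs where qs: "\<forall>(a,b)\<in>set qs. adj a b" "lrun adj t (flat qs) = []"
  proof (cases "t = []")
    case True then show ?thesis using that[of "[]"] by simp
  next
    case False
    then obtain x y where w: "t = [x,y]" "x \<in> V" "y \<in> V" "\<not> adj x y"
      using \<open>gs V adj t\<close> by (auto simp: gs_def)
    obtain m where "(adj ^^ (2*m+1)) x y" using odd_walk[OF sg cn nb w(2,3)] by blast
    then show ?thesis using kill[OF sg, of m x] w that by blast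
  qed
  show ?case
  proof (intro exI[of _ "ps @ qs"] conjI)
    show "\<forall>(a,b)\<in>set (ps@qs). adj a b" using ps qs by auto
    show "\<forall>s\<in>insert s S. lrun adj s (flat (ps@qs)) = []"
      using ps(2) qs t_def lrun_nil_pairs[OF qs(1)] by (auto simp: flat_append lrun_append)
  qed
qed

lemma part2:
  assumes sg: "simple_graph V adj" and cn: "connected_graph V adj" and nb: "\<not> bipartite V adj"
  shows "\<exists>z. strong_erasing_word V adj \<nu> (lcfm adj) z"
proof -
  define S where "S = (\<lambda>(i,j). [i,j]) ` {(i,j). i\<in>V \<and> j\<in>V \<and> \<not> adj i j}"
  have fV: "finite V" using sg by (simp add: simple_graph_def)
  have "finite {(i,j). i\<in>V \<and> j\<in>V \<and> \<not> adj i j}"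
    by (rule finite_subset[of _ "V \<times> V"]) (auto simp: fV)
  then have fS: "finite S" unfolding S_def by simp
  have "S \<subseteq> {w. gs V adj w}" unfolding S_def gs_def by auto
  then obtain ps where ps: "\<forall>(a,b)\<in>set ps. adj a b" "\<forall>s\<in>S. lrun adj s (flat ps) = []"
    using sync[OF sg cn nb fS] by blast
  define z where "z = flat ps"
  have Q: "Q (lcfm adj) xs ss = lrun adj [] xs" if "length ss = length xs" for xs ss
    unfolding Q_def using fold_lrun[OF that] by simp
  show ?thesis
  proof (intro exI[of _ z])
    have "set z \<subseteq> V" unfolding z_def set_flat using ps(1) sg_V[OF sg] by fastforce
    moreover have "even (length z)" by (simp add: z_def length_flat)
    moreover have "Q (lcfm adj) ([i, j] @ z) (s @ s') = []"
      if "i\<in>V" "j\<in>V" "\<not> adj i j" "length s = 2" "length s' = length z" for i j s s'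
    proof -
      have "[i,j] \<in> S" unfolding S_def using that by auto
      then have "lrun adj [i,j] z = []" using ps(2) z_def by auto
      moreover have "lrun adj [] [i,j] = [i,j]" using that(3) by (simp add: lrun_Cons L_nil L_one_no)
      ultimately show ?thesis using that lrun_append[of adj "[]" "[i,j]" z] by (subst Q) simp_all
    qed
    moreover have "Q (lcfm adj) (drop (2 * l) z) (drop (2 * l) s') = []"
      if "length s' = length z" for l s'
    proof -
      have "\<forall>(a,b)\<in>set (drop l ps). adj a b" using ps(1) by (meson in_set_dropD)
      then show ?thesis using that by (subst Q) (simp_all add: z_def drop_flat lrun_nil_pairs length_flat)
    qed
    ultimately show "strong_erasing_word V adj \<nu> (lcfm adj) z"
      unfolding strong_erasing_word_def by blast
  qed
qed



definition partP :: "'v set \<Rightarrow> ('v \<Rightarrow> 'v \<Rightarrow> bool) \<Rightarrow> 'v set set \<Rightarrow> bool" where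
  "partP V adj P \<longleftrightarrow> \<Union>P = V \<and> (\<forall>I\<in>P. I \<noteq> {}) \<and>
          (\<forall>I\<in>P. \<forall>J\<in>P. I \<noteq> J \<longrightarrow> I \<inter> J = {}) \<and>
          (\<forall>I\<in>P. maximal_independent_set V adj I) \<and>
          (\<forall>I\<in>P. \<forall>J\<in>P. I \<noteq> J \<longrightarrow> (\<forall>u\<in>I. \<forall>v\<in>J. adj u v))"

lemma pUV: "partP V adj P \<Longrightarrow> \<Union>P = V" unfolding partP_def by (elim conjE)
lemma pne': "partP V adj P \<Longrightarrow> (\<forall>I\<in>P. I \<noteq> {})" unfolding partP_def by (elim conjE)
lemma pdis': "partP V adj P \<Longrightarrow> (\<forall>I\<in>P. \<forall>J\<in>P. I \<noteq> J \<longrightarrow> I \<inter> J = {})" unfolding partP_def by (elim conjE)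
lemma pmis': "partP V adj P \<Longrightarrow> (\<forall>I\<in>P. maximal_independent_set V adj I)" unfolding partP_def by (elim conjE)
lemma pcross': "partP V adj P \<Longrightarrow> (\<forall>I\<in>P. \<forall>J\<in>P. I \<noteq> J \<longrightarrow> (\<forall>u\<in>I. \<forall>v\<in>J. adj u v))" unfolding partP_def by (elim conjE)
lemma pne: "partP V adj P \<Longrightarrow> I \<in> P \<Longrightarrow> I \<noteq> {}" using pne' by blast
lemma pdis: "partP V adj P \<Longrightarrow> I \<in> P \<Longrightarrow> J \<in> P \<Longrightarrow> I \<noteq> J \<Longrightarrow> I \<inter> J = {}"
  using pdis'[of V adj P] by blast
lemma pmis: "partP V adj P \<Longrightarrow> I \<in> P \<Longrightarrow> maximal_independent_set V adj I"
  using pmis'[of V adj P] by blast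
lemma pcross: "partP V adj P \<Longrightarrow> I \<in> P \<Longrightarrow> J \<in> P \<Longrightarrow> I \<noteq> J \<Longrightarrow> u \<in> I \<Longrightarrow> v \<in> J \<Longrightarrow> adj u v"
  using pcross'[of V adj P] by blast

definition blk :: "'v set set \<Rightarrow> 'v \<Rightarrow> 'v set" where
  "blk P v = (SOME Y. Y \<in> P \<and> v \<in> Y)"

lemma blk_eq: "partP V adj P \<Longrightarrow> Y \<in> P \<Longrightarrow> v \<in> Y \<Longrightarrow> blk P v = Y"
proof -
  assume pp: "partP V adj P" and Y: "Y \<in> P" "v \<in> Y"
  show ?thesis unfolding blk_def
  proof (rule some_equality)
    show "Y \<in> P \<and> v \<in> Y" using Y by simp
    fix Z assume Z: "Z \<in> P \<and> v \<in> Z"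
    show "Z = Y"
    proof (rule ccontr)
      assume "Z \<noteq> Y"
      then have "Z \<inter> Y = {}" using pdis[OF pp] Z Y by blast
      then show False using Z Y by blast
    qed
  qed
qed

lemma blk_in: "partP V adj P \<Longrightarrow> v \<in> V \<Longrightarrow> blk P v \<in> P \<and> v \<in> blk P v"
proof -
  assume "partP V adj P" "v \<in> V"
  then have "v \<in> \<Union>P" using pUV by blast
  then have "\<exists>Y. Y \<in> P \<and> v \<in> Y" by blast
  then show ?thesis unfolding blk_def by (rule someI_ex)
qed

fun anext :: "'v set set \<Rightarrow> 'v set \<times> nat \<Rightarrow> 'v \<Rightarrow> 'v set \<times> nat" where
  "anext P (X,n) v = (if n = 0 then (blk P v, 1) else if v \<in> X then (X, Suc n) else (X, n - 1))"

definition ainv :: "'v set set \<Rightarrow> 'v set \<times> nat \<Rightarrow> 'v list \<Rightarrow> bool" where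
  "ainv P st w \<longleftrightarrow> fst st \<in> P \<and> set w \<subseteq> fst st \<and> length w = snd st"

lemma astep:
  assumes pp: "partP V adj P" and ad: "admissible V adj \<nu> step"
    and inv: "ainv P (X,n) w" and vV: "v \<in> V" and sp: "\<sigma> \<in> prefs V adj"
  shows "ainv P (anext P (X,n) v) (step w v \<sigma>)"
proof -
  have XP: "X \<in> P" and wX: "set w \<subseteq> X" and lw: "length w = n" using inv by (auto simp: ainv_def)
  have mis: "maximal_independent_set V adj X" using pmis[OF pp XP] .
  then have XV: "X \<subseteq> V" and ind: "independent_set adj X" by (auto simp: maximal_independent_set_def)
  have wV: "set w \<subseteq> V" using wX XV by auto
  have inW: "in_W adj w" using wX ind by (auto simp: in_W_def independent_set_def)
  have A: "(if (\<forall>u\<in>set w. \<not> adj u v) then step w v \<sigma> = w @ [v]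
         else (\<exists>k<length w. adj (w ! k) v \<and> step w v \<sigma> = take k w @ drop (Suc k) w))"
    using ad wV inW vV sp unfolding admissible_def by blast
  show ?thesis
  proof (cases "n = 0")
    case True
    then have "w = []" using lw by simp
    then have "step w v \<sigma> = [v]" using A by simp
    then show ?thesis using True blk_in[OF pp vV] by (simp add: ainv_def)
  next
    case n0: False
    show ?thesis
    proof (cases "v \<in> X")
      case True
      then have "\<forall>u\<in>set w. \<not> adj u v" using wX ind by (auto simp: independent_set_def)
      then have "step w v \<sigma> = w @ [v]" using A by simp
      then show ?thesis using n0 True XP wX lw by (simp add: ainv_def)
    next
      case False
      have "w \<noteq> []" using n0 lw by auto
      then obtain u where uw: "u \<in> set w" by (cases w) auto
      have "blk P v \<in> P" "v \<in> blk P v" using blk_in[OF pp vV] by auto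
      moreover have "blk P v \<noteq> X" using False \<open>v \<in> blk P v\<close> by auto
      moreover have "u \<in> X" using uw wX by auto
      ultimately have "adj u v" using pcross[OF pp XP, of "blk P v" u v] by simp
      then obtain k where k: "k < length w" "step w v \<sigma> = take k w @ drop (Suc k) w"
        using A uw by (auto split: if_splits)
      have "set (step w v \<sigma>) \<subseteq> set w" using k(2) by (auto dest: in_set_takeD in_set_dropD)
      moreover have "length (step w v \<sigma>) = n - 1" using k lw by simp
      ultimately show ?thesis using n0 False XP wX by (auto simp: ainv_def)
    qed
  qed
qed

lemma afold:
  assumes pp: "partP V adj P" and ad: "admissible V adj \<nu> step"
  shows "length ss = length vs \<Longrightarrow> set vs \<subseteq> V \<Longrightarrow> set ss \<subseteq> prefs V adj \<Longrightarrow> ainv P st w \<Longrightarrow>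
    ainv P (foldl (anext P) st vs) (foldl (\<lambda>w (x, s). step w x s) w (zip vs ss))"
proof (induction vs arbitrary: ss st w)
  case Nil then show ?case by simp
next
  case (Cons v vs)
  then obtain s ss' where ss: "ss = s # ss'" by (cases ss) auto
  obtain X n where st: "st = (X,n)" by (cases st)
  have "ainv P (anext P st v) (step w v s)"
    using astep[OF pp ad] Cons.prems ss st by auto
  then have "ainv P (foldl (anext P) (anext P st v) vs) (foldl (\<lambda>w (x, s). step w x s) (step w v s) (zip vs ss'))"
    using Cons.IH[of ss' "anext P st v" "step w v s"] Cons.prems ss by auto
  then show ?case using ss by (simp del: anext.simps)
qed

lemma Q_ainv:
  assumes pp: "partP V adj P" and ad: "admissible V adj \<nu> step" and AP: "A \<in> P"
    and l: "length ss = length vs" and vV: "set vs \<subseteq> V" and sn: "set ss \<subseteq> set_pmf \<nu>"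
    and z: "snd (foldl (anext P) (A,0) vs) = 0"
  shows "Q step vs ss = []"
proof -
  have sp: "set ss \<subseteq> prefs V adj" using sn ad by (auto simp: admissible_def)
  have "ainv P (A,0) []" using AP by (simp add: ainv_def)
  then have "ainv P (foldl (anext P) (A,0) vs) (Q step vs ss)"
    unfolding Q_def using afold[OF pp ad l vV sp] by blast
  then show ?thesis using z by (simp add: ainv_def)
qed

lemma part1:
  assumes sg: "simple_graph V adj" and sep: "separable_of_order V adj p" and p3: "p \<ge> 3"
    and ad: "admissible V adj \<nu> step"
  shows "\<exists>z. strong_erasing_word V adj \<nu> step z"
proof -
  have "\<exists>P. card P = p \<and> partP V adj P"
    using sep unfolding separable_of_order_def partP_def by (elim conjE)
  then obtain P where cP: "card P = p" and pp: "partP V adj P" by blast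
  have fP: "finite P"
  proof (rule ccontr)
    assume "infinite P" then have "card P = 0" by simp
    then show False using cP p3 by simp
  qed
  note ne = pne[OF pp] and dis = pdis[OF pp] and cross = pcross[OF pp]
  have UV: "\<Union>P = V" using pUV[OF pp] .
  obtain A B C where ABC: "A \<in> P" "B \<in> P" "C \<in> P" "A \<noteq> B" "A \<noteq> C" "B \<noteq> C"
  proof -
    have "P \<noteq> {}" using cP p3 by auto
    then obtain A where A: "A \<in> P" by auto
    have "card (P - {A}) \<ge> 2" using cP p3 A fP by simp
    then have "P - {A} \<noteq> {}" by (metis card.empty not_numeral_le_zero)
    then obtain B where B: "B \<in> P" "B \<noteq> A" by auto
    have "card (P - {A} - {B}) \<ge> 1" using cP p3 A B fP by (simp add: card_Diff_singleton_if)
    then have "P - {A} - {B} \<noteq> {}" by (metis card.empty not_one_le_zero)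
    then obtain C where C: "C \<in> P" "C \<noteq> A" "C \<noteq> B" by auto
    show ?thesis by (rule that[OF A B(1) C(1)]) (use B C in auto)
  qed
  obtain a where a: "a \<in> A" using ne[OF ABC(1)] by blast
  obtain b where b: "b \<in> B" using ne[OF ABC(2)] by blast
  obtain c where c: "c \<in> C" using ne[OF ABC(3)] by blast
  note abc = a b c
  have V: "a \<in> V" "b \<in> V" "c \<in> V" using abc ABC(1-3) UV by blast+
  have bl: "blk P a = A" "blk P b = B" "blk P c = C"
    using blk_eq[OF pp ABC(1) a] blk_eq[OF pp ABC(2) b] blk_eq[OF pp ABC(3) c] by auto
  have nm: "a \<notin> B" "a \<notin> C" "b \<notin> A" "b \<notin> C" "c \<notin> A" "c \<notin> B"
    using dis[OF ABC(1) ABC(2) ABC(4)] dis[OF ABC(1) ABC(3) ABC(5)] dis[OF ABC(2) ABC(3) ABC(6)] abc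
    by blast+
  define z where "z = [b,c,a,c,a,b]"
  have zV: "set z \<subseteq> V" using V by (simp add: z_def)
  show ?thesis
  proof (intro exI[of _ z])
    have "Q step ([i, j] @ z) (s @ s') = []"
      if ij: "i\<in>V" "j\<in>V" "\<not> adj i j" and ls: "length s = 2" "length s' = length z"
        and ss: "set s \<subseteq> set_pmf \<nu>" "set s' \<subseteq> set_pmf \<nu>" for i j s s'
    proof (rule Q_ainv[OF pp ad ABC(1)])
      show "length (s @ s') = length ([i, j] @ z)" using ls by simp
      show "set ([i, j] @ z) \<subseteq> V" using ij zV by simp
      show "set (s @ s') \<subseteq> set_pmf \<nu>" using ss by simp
      obtain X where X: "X \<in> P" "i \<in> X" using UV ij(1) by auto
      have jX: "j \<in> X"
      proof (rule ccontr)
        assume "j \<notin> X"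
        obtain Y where Y: "Y \<in> P" "j \<in> Y" using UV ij(2) by auto
        then have "X \<noteq> Y" using \<open>j \<notin> X\<close> by auto
        then show False using cross[OF X(1) Y(1) _ X(2) Y(2)] ij(3) by simp
      qed
      have bX: "blk P i = X" "blk P j = X" using blk_eq[OF pp X(1)] X(2) jX by auto
      show "snd (foldl (anext P) (A, 0) ([i, j] @ z)) = 0"
      proof -
        consider "X = A" | "X = B" | "X = C" | "X \<noteq> A \<and> X \<noteq> B \<and> X \<noteq> C" by blast
        then show ?thesis
        proof cases
          case 1 then show ?thesis using bX bl nm abc jX by (simp add: z_def)
        next
          case 2 then show ?thesis using bX bl nm abc jX by (simp add: z_def)
        next
          case 3 then show ?thesis using bX bl nm abc jX by (simp add: z_def)
        next
          case 4
          then have "a \<notin> X" "b \<notin> X" "c \<notin> X"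
            using dis[OF X(1) ABC(1)] dis[OF X(1) ABC(2)] dis[OF X(1) ABC(3)] abc by blast+
          then show ?thesis using bX bl nm abc jX by (simp add: z_def)
        qed
      qed
    qed
    moreover have "Q step (drop (2 * l) z) (drop (2 * l) s') = []"
      if l: "l < length z div 2" and ls: "length s' = length z" and ss: "set s' \<subseteq> set_pmf \<nu>" for l s'
    proof (rule Q_ainv[OF pp ad ABC(1)])
      show "length (drop (2 * l) s') = length (drop (2 * l) z)" using ls by simp
      show "set (drop (2 * l) z) \<subseteq> V" using zV by (meson in_set_dropD subsetD subsetI)
      show "set (drop (2 * l) s') \<subseteq> set_pmf \<nu>" using ss by (meson in_set_dropD subsetD subsetI)
      have "l = 0 \<or> l = 1 \<or> l = 2" using l by (auto simp: z_def)
      then show "snd (foldl (anext P) (A, 0) (drop (2 * l) z)) = 0"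
        using bl nm abc by (elim disjE) (simp_all add: z_def)
    qed
    moreover have "even (length z)" by (simp add: z_def)
    ultimately show "strong_erasing_word V adj \<nu> step z"
      unfolding strong_erasing_word_def using zV by blast
  qed
qed


theorem mainTheorem11:
  fixes V :: "'v set" and adj :: "'v \<Rightarrow> 'v \<Rightarrow> bool"
  assumes "simple_graph V adj" and "connected_graph V adj"
  shows "((\<exists>p \<ge> 3. separable_of_order V adj p) \<longrightarrow>
            (\<forall>\<nu> step. admissible V adj \<nu> step \<longrightarrow> (\<exists>z. strong_erasing_word V adj \<nu> step z)))
       \<and> (\<not> bipartite V adj \<longrightarrow>
            (\<forall>\<nu>. admissible V adj \<nu> (lcfm adj) \<longrightarrow> (\<exists>z. strong_erasing_word V adj \<nu> (lcfm adj) z)))"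
  using part1[OF assms(1)] part2[OF assms(1,2)] by blast

end
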